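(* Let $n\geqslant 2$. Then the semigroup $\mathbf{I}\mathbb{N}_{\infty}^n$ is isomorphic to the semidirect product $\mathscr{S}_n\ltimes_{\mathfrak{h}}(\mathscr{P}_{\infty}(\mathbb{N}^n),\cup)$ of the free semilattice with unit $(\mathscr{P}_{\infty}(\mathbb{N}^n),\cup)$ by the symmetric group $\mathscr{S}_n$, where $\sigma\in\mathscr{S}_n$ acts on a finite set $F\subseteq\mathbb{N}^n$ by $(F)\mathfrak{h}_\sigma=(F)\alpha_\sigma=\{(\mathbf{x})\alpha_\sigma\colon\mathbf{x}\in F\}$. Equivalently, $\mathbf{I}\mathbb{N}_{\infty}^n\cong H(\mathbb{I})\ltimes_{\mathfrak{h}}E(\mathbf{I}\mathbb{N}_{\infty}^n)$ with $(\varepsilon)\mathfrak{h}_\sigma=\sigma^{-1}\varepsilon\sigma$, via $\alpha\mapsto(\sigma_\alpha,\alpha^{-1}\alpha)$, where $\sigma_\alpha$ is the unique unit with $\alpha=\sigma_\alpha\varepsilon$ for some idempotent $\varepsilon$.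
   Context: $\mathbb{N}=\{1,2,3,\ldots\}$, $n\geqslant 2$, and $\mathbb{N}^n$ carries the Euclidean metric $d$. A partial isometry of $\mathbb{N}^n$ is an injective partial map $\alpha\colon\mathbb{N}^n\rightharpoonup\mathbb{N}^n$ with $d((\mathbf{x})\alpha,(\mathbf{y})\alpha)=d(\mathbf{x},\mathbf{y})$ for all $\mathbf{x},\mathbf{y}\in\operatorname{dom}\alpha$; it is cofinite if $\mathbb{N}^n\setminus\operatorname{dom}\alpha$ and $\mathbb{N}^n\setminus\operatorname{ran}\alpha$ are finite. $\mathbf{I}\mathbb{N}_{\infty}^n$ is the monoid of all partial cofinite isometries of $\mathbb{N}^n$ under composition of partial maps written on the right: $\mathbf{x}(\alpha\beta)=(\mathbf{x}\alpha)\beta$. Its identity is the identity map $\mathbb{I}$, $H(\mathbb{I})$ is its group of units and $E(\mathbf{I}\mathbb{N}_{\infty}^n)$ its semilattice of idempotents. $\mathscr{S}_n$ is the group of permutations of $\{1,\ldots,n\}$ acting on the right (composed left to right); for $\sigma\in\mathscr{S}_n$, $\alpha_\sigma$ is the isometry $(x_1,\ldots,x_n)\alpha_\sigma=(y_1,\ldots,y_n)$ with $y_{(i)\sigma}=x_i$. $(\mathscr{P}_{\infty}(X),\cup)$ is the semilattice of all finite subsets of $X$ (including $\emptyset$) under union. For semigroups $A,B$ and a homomorphism $\mathfrak{h}\colon A\to\operatorname{End}(B)$, $a\mapsto\mathfrak{h}_a$ (endomorphisms written on the right, composed left to right), the semidirect product $A\ltimes_{\mathfrak{h}}B$ is $A\times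 B$ with multiplication $(a_1,b_1)(a_2,b_2)=(a_1a_2,(b_1)\mathfrak{h}_{a_2}\,b_2)$. *)

theory Defs
  imports Complex_Main "HOL-Combinatorics.Permutations"
begin

text \<open>Points of N^n (N = {1,2,...}) are encoded as functions nat => nat whose
  coordinates 0..n-1 are >= 1 and which vanish at indices >= n.\<close>

definition Pts :: "nat \<Rightarrow> (nat \<Rightarrow> nat) set" where
  "Pts n = {x. (\<forall>i<n. 1 \<le> x i) \<and> (\<forall>i\<ge>n. x i = 0)}"

definition edist :: "nat \<Rightarrow> (nat \<Rightarrow> nat) \<Rightarrow> (nat \<Rightarrow> nat) \<Rightarrow> real" where
  "edist n x y = sqrt (\<Sum>i<n. (real (x i) - real (y i))^2)"

definition partial_isometry :: "nat \<Rightarrow> ((nat \<Rightarrow> nat) \<rightharpoonup> (nat \<Rightarrow> nat)) \<Rightarrow> bool" where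
  "partial_isometry n a \<longleftrightarrow> dom a \<subseteq> Pts n \<and> ran a \<subseteq> Pts n \<and> inj_on a (dom a) \<and>
     (\<forall>x\<in>dom a. \<forall>y\<in>dom a. edist n (the (a x)) (the (a y)) = edist n x y)"

definition cofinite_pmap :: "nat \<Rightarrow> ((nat \<Rightarrow> nat) \<rightharpoonup> (nat \<Rightarrow> nat)) \<Rightarrow> bool" where
  "cofinite_pmap n a \<longleftrightarrow> finite (Pts n - dom a) \<and> finite (Pts n - ran a)"

definition INinf :: "nat \<Rightarrow> ((nat \<Rightarrow> nat) \<rightharpoonup> (nat \<Rightarrow> nat)) set" where
  "INinf n = {a. partial_isometry n a \<and> cofinite_pmap n a}"

text \<open>Composition of partial maps written on the right: x(ab) = (xa)b.\<close>
definition pcomp :: "('a \<rightharpoonup> 'a) \<Rightarrow> ('a \<rightharpoonup> 'a) \<Rightarrow> ('a \<rightharpoonup> 'a)" where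
  "pcomp a b = b \<circ>\<^sub>m a"

text \<open>S_n: permutations of the index set {0..n-1}, acting on the right and composed
  left to right: i(st) = (is)t.\<close>
definition Sym :: "nat \<Rightarrow> (nat \<Rightarrow> nat) set" where
  "Sym n = {s. s permutes {..<n}}"

definition sym_mult :: "(nat \<Rightarrow> nat) \<Rightarrow> (nat \<Rightarrow> nat) \<Rightarrow> (nat \<Rightarrow> nat)" where
  "sym_mult s t = t \<circ> s"

text \<open>alpha_sigma: (x alpha_sigma) = y with y_(i sigma) = x_i, i.e. y_j = x_(sigma^-1 j).\<close>
definition alpha_perm :: "(nat \<Rightarrow> nat) \<Rightarrow> (nat \<Rightarrow> nat) \<Rightarrow> (nat \<Rightarrow> nat)" where
  "alpha_perm s x = (\<lambda>j. x (inv s j))"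

definition hact :: "(nat \<Rightarrow> nat) \<Rightarrow> (nat \<Rightarrow> nat) set \<Rightarrow> (nat \<Rightarrow> nat) set" where
  "hact s F = alpha_perm s ` F"

definition SDP :: "nat \<Rightarrow> ((nat \<Rightarrow> nat) \<times> (nat \<Rightarrow> nat) set) set" where
  "SDP n = Sym n \<times> {F. finite F \<and> F \<subseteq> Pts n}"

definition sdp_mult :: "((nat \<Rightarrow> nat) \<times> (nat \<Rightarrow> nat) set) \<Rightarrow> ((nat \<Rightarrow> nat) \<times> (nat \<Rightarrow> nat) set)
    \<Rightarrow> ((nat \<Rightarrow> nat) \<times> (nat \<Rightarrow> nat) set)" where
  "sdp_mult p q = (sym_mult (fst p) (fst q), hact (fst q) (snd p) \<union> snd q)"

end

theory Submission
  imports Defs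
begin

lemma al_Pts: assumes "s permutes {..<n}" "x \<in> Pts n" shows "alpha_perm s x \<in> Pts n"
proof -
  have i: "inv s permutes {..<n}" using assms(1) by (rule permutes_inv)
  show ?thesis using assms(2) permutes_in_image[OF i] permutes_not_in[OF i]
    unfolding Pts_def alpha_perm_def by auto
qed

lemma al_inv1: assumes "s permutes S" shows "alpha_perm s (alpha_perm (inv s) x) = x"
  unfolding alpha_perm_def using inv_inv_eq[OF permutes_bij[OF assms]] permutes_inverses[OF assms]
  by simp

lemma al_inv2: assumes "s permutes S" shows "alpha_perm (inv s) (alpha_perm s x) = x"
  unfolding alpha_perm_def using inv_inv_eq[OF permutes_bij[OF assms]] permutes_inverses[OF assms]
  by simp

lemma al_comp: assumes "s permutes S" "t permutes S"
  shows "alpha_perm t (alpha_perm s x) = alpha_perm (t \<circ> s) x"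
  unfolding alpha_perm_def using o_inv_distrib[OF permutes_bij[OF assms(2)] permutes_bij[OF assms(1)]]
  by simp

lemma al_inj: assumes "s permutes S" "alpha_perm s x = alpha_perm s y" shows "x = y"
  by (metis al_inv2 assms)

definition d2 :: "nat \<Rightarrow> (nat\<Rightarrow>nat) \<Rightarrow> (nat\<Rightarrow>nat) \<Rightarrow> int" where
  "d2 n x y = (\<Sum>i<n. (int (x i) - int (y i))^2)"

lemma edist_d2: "edist n x y = sqrt (real_of_int (d2 n x y))"
  unfolding edist_def d2_def by simp

lemma edist_eq_iff: "edist n x y = edist n u v \<longleftrightarrow> d2 n x y = d2 n u v"
  unfolding edist_d2 by simp

lemma d2_al: assumes "s permutes {..<n}" shows "d2 n (alpha_perm s x) (alpha_perm s y) = d2 n x y"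
  unfolding d2_def alpha_perm_def
  using sum.permute[OF permutes_inv[OF assms], of "\<lambda>i. (int (x i) - int (y i))^2"]
  by (simp add: o_def)

lemma bound_ex: "finite (S::(nat\<Rightarrow>nat) set) \<Longrightarrow> \<exists>M::nat. \<forall>x\<in>S. \<forall>k<(n::nat). x k \<le> M"
proof (induction S rule: finite_induct)
  case empty then show ?case by simp
next
  case (insert y S)
  then obtain M where M: "\<forall>x\<in>S. \<forall>k<n. x k \<le> M" by blast
  show ?case
    apply (rule exI[of _ "M + (\<Sum>k<n. y k)"])
  proof (intro ballI allI impI)
    fix x k assume x: "x \<in> insert y S" and k: "k < n"
    have "y k \<le> (\<Sum>k<n. y k)" using k by (intro member_le_sum) auto
    then show "x k \<le> M + (\<Sum>k<n. y k)" using x k M by (auto intro: trans_le_add1)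
  qed
qed

lemma int_sq_sum1: fixes q :: "nat \<Rightarrow> int" assumes "(\<Sum>j<n. (q j)^2) = 1"
  shows "\<exists>j<n. (q j)^2 = 1 \<and> (\<forall>k<n. k \<noteq> j \<longrightarrow> q k = 0)"
proof -
  have "\<exists>j<n. q j \<noteq> 0"
  proof (rule ccontr)
    assume "\<not> ?thesis" then have "(\<Sum>j<n. (q j)^2) = 0" by simp
    with assms show False by simp
  qed
  then obtain j where j: "j < n" "q j \<noteq> 0" by blast
  have s: "(\<Sum>j<n. (q j)^2) = (q j)^2 + (\<Sum>k\<in>{..<n}-{j}. (q k)^2)"
    using j by (simp add: sum.remove)
  have r: "(\<Sum>k\<in>{..<n}-{j}. (q k)^2) \<ge> 0" by (simp add: sum_nonneg)
  have "(q j)^2 \<ge> 1" using j(2)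
  proof -
    have "(q j)^2 > 0" using j(2) by simp
    then show ?thesis by linarith
  qed
  then have e: "(q j)^2 = 1" "(\<Sum>k\<in>{..<n}-{j}. (q k)^2) = 0" using s r assms by linarith+
  have "\<forall>k\<in>{..<n}-{j}. (q k)^2 = 0"
    using e(2) sum_nonneg_eq_0_iff[of "{..<n}-{j}" "\<lambda>k. (q k)^2"] by simp
  then show ?thesis using j e(1) by auto
qed


lemma main:
  assumes n2: "n \<ge> 2" and aI: "a \<in> INinf n"
  shows "\<exists>s\<in>Sym n. \<forall>x\<in>dom a. a x = Some (alpha_perm s x)"
proof -
  let ?P = "Pts n"
  have pi: "partial_isometry n a" and cf: "cofinite_pmap n a" using aI by (auto simp: INinf_def)
  have domP: "dom a \<subseteq> ?P" and ranP: "ran a \<subseteq> ?P"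
    and isom: "\<forall>x\<in>dom a. \<forall>y\<in>dom a. edist n (the (a x)) (the (a y)) = edist n x y"
    using pi by (auto simp: partial_isometry_def)
  have fin: "finite ((?P - dom a) \<union> (?P - ran a))" using cf by (auto simp: cofinite_pmap_def)
  obtain M :: nat where M: "\<forall>x\<in>(?P - dom a) \<union> (?P - ran a). \<forall>k<n. x k \<le> M"
    using bound_ex[OF fin] by blast
  have big: "x \<in> dom a \<and> x \<in> ran a" if "x \<in> ?P" "k < n" "x k > M" for x k
    using M that by force
  define f where "f x = the (a x)" for x
  have af: "a x = Some (f x)" if "x \<in> dom a" for x using that by (auto simp: f_def)
  have fP: "f x \<in> ?P" if "x \<in> dom a" for x
    using af[OF that] ranP by (auto simp: ran_def)
  have d2f: "d2 n (f x) (f y) = d2 n x y" if "x\<in>dom a" "y\<in>dom a" for x y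
    using isom that by (simp add: f_def edist_eq_iff)
  define ip where "ip u v w = (\<Sum>j<n. (int (u j) - int (w j)) * (int (v j) - int (w j)))"
    for u v w :: "nat \<Rightarrow> nat"
  have pol: "2 * ip u v w = d2 n u w + d2 n v w - d2 n u v" for u v w
  proof -
    have "d2 n u w + d2 n v w - d2 n u v = (\<Sum>j<n. (int(u j) - int(w j))^2 + (int(v j) - int(w j))^2 - (int(u j)-int(v j))^2)"
      by (simp add: d2_def sum.distrib sum_subtractf)
    also have "\<dots> = (\<Sum>j<n. 2 * ((int (u j) - int (w j)) * (int (v j) - int (w j))))"
      by (rule sum.cong) (auto simp: power2_eq_square algebra_simps)
    also have "\<dots> = 2 * ip u v w" by (simp add: ip_def sum_distrib_left)
    finally show ?thesis by simp
  qed
  have ipf: "ip (f x) (f y) (f z) = ip x y z" if "x\<in>dom a" "y\<in>dom a" "z\<in>dom a" for x y z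
    using pol[of "f x" "f y" "f z"] pol[of x y z] d2f that by simp
  define pt where "pt t i = (\<lambda>j. if j < n then (if j = i then t else M+1) else 0)" for t i :: nat
  define p where "p = pt (M+1) 0"
  have pt_p: "pt (M+1) i = p" for i by (auto simp: pt_def p_def)
  have ptP: "pt t i \<in> ?P" if "t \<ge> 1" for t i using that by (auto simp: pt_def Pts_def)
  have ptD: "pt t i \<in> dom a" if "t \<ge> 1" "i < n" for t i
  proof -
    define k where "k = (if i = 0 then 1 else 0::nat)"
    have "k < n" "k \<noteq> i" using n2 by (auto simp: k_def)
    then have "pt t i k > M" by (auto simp: pt_def)
    then show ?thesis using big[OF ptP[OF that(1)] \<open>k < n\<close>] by blast
  qed
  have pD: "p \<in> dom a" using ptD[of "M+1" 0] n2 pt_p by simp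
  have eD: "pt (M+2) i \<in> dom a" if "i < n" for i using ptD that by simp
  define q where "q i j = int (f (pt (M+2) i) j) - int (f p j)" for i j
  have q1: "(\<Sum>j<n. (q i j)^2) = 1" if "i < n" for i
  proof -
    have "(\<Sum>j<n. (q i j)^2) = d2 n (f (pt (M+2) i)) (f p)" by (simp add: q_def d2_def)
    also have "\<dots> = d2 n (pt (M+2) i) p" using d2f eD[OF that] pD by simp
    also have "\<dots> = (\<Sum>j<n. if j = i then 1 else 0)"
      unfolding d2_def by (rule sum.cong) (auto simp: pt_def p_def)
    also have "\<dots> = 1" using that by simp
    finally show ?thesis .
  qed
  have "\<forall>i. \<exists>j. i < n \<longrightarrow> j < n \<and> (q i j)^2 = 1 \<and> (\<forall>k<n. k \<noteq> j \<longrightarrow> q i k = 0)"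
    using int_sq_sum1[OF q1] by blast
  then obtain \<pi> where \<pi>: "\<And>i. i < n \<Longrightarrow> \<pi> i < n \<and> (q i (\<pi> i))^2 = 1 \<and> (\<forall>k<n. k \<noteq> \<pi> i \<longrightarrow> q i k = 0)"
    by metis
  have K0: "(int (f x (\<pi> i)) - int (f p (\<pi> i))) * q i (\<pi> i) = int (x i) - int (M+1)"
    if x: "x \<in> dom a" and i: "i < n" for x i
  proof -
    have "ip (f x) (f (pt (M+2) i)) (f p) = (\<Sum>j<n. if j = \<pi> i then (int (f x (\<pi> i)) - int (f p (\<pi> i))) * q i (\<pi> i) else 0)"
      unfolding ip_def by (rule sum.cong) (use \<pi>[OF i] in \<open>auto simp: q_def\<close>)
    also have "\<dots> = (int (f x (\<pi> i)) - int (f p (\<pi> i))) * q i (\<pi> i)" using \<pi>[OF i] by simp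
    finally have 1: "ip (f x) (f (pt (M+2) i)) (f p) = (int (f x (\<pi> i)) - int (f p (\<pi> i))) * q i (\<pi> i)" .
    have "ip x (pt (M+2) i) p = (\<Sum>j<n. if j = i then int (x i) - int (M+1) else 0)"
      unfolding ip_def by (rule sum.cong) (auto simp: pt_def p_def)
    also have "\<dots> = int (x i) - int (M+1)" using i by simp
    finally have 2: "ip x (pt (M+2) i) p = int (x i) - int (M+1)" .
    show ?thesis using 1 2 ipf[OF x eD[OF i] pD] by simp
  qed
  have sgn: "q i (\<pi> i) = 1" if i: "i < n" for i
  proof (rule ccontr)
    assume "q i (\<pi> i) \<noteq> 1"
    then have m: "q i (\<pi> i) = -1" using \<pi>[OF i] power2_eq_1_iff by blast
    define t where "t = f p (\<pi> i) + M + 2"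
    have "pt t i \<in> dom a" using ptD i by (simp add: t_def)
    from K0[OF this i] m have "int (f (pt t i) (\<pi> i)) = int (f p (\<pi> i)) - (int t - int (M+1))"
      by (simp add: pt_def i algebra_simps)
    then have "int (f (pt t i) (\<pi> i)) = -1" by (simp add: t_def)
    then show False by simp
  qed
  define c where "c i = int (f p (\<pi> i)) - int (M+1)" for i
  have K: "int (f x (\<pi> i)) = int (x i) + c i" if "x \<in> dom a" "i < n" for x i
    using K0[OF that] sgn[OF that(2)] by (simp add: c_def)
  have inj: "i = k" if "i < n" "k < n" "\<pi> i = \<pi> k" for i k
  proof (rule ccontr)
    assume ne: "i \<noteq> k"
    have "c i = c k" using that(3) by (simp add: c_def)
    moreover have "int (f (pt (M+2) i) (\<pi> i)) = int (M+2) + c i" using K[OF eD[OF that(1)] that(1)]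
      by (simp add: pt_def that(1))
    moreover have "int (f (pt (M+2) i) (\<pi> k)) = int (M+1) + c k" using K[OF eD[OF that(1)] that(2)] ne
      by (simp add: pt_def that(2))
    ultimately show False using that(3) by simp
  qed
  have c0: "c i = 0" if i: "i < n" for i
  proof -
    have "\<not> c i < 0"
    proof
      assume "c i < 0"
      have "pt 1 i \<in> dom a" using ptD i by simp
      from fP[OF this] have "f (pt 1 i) (\<pi> i) \<ge> 1" using \<pi>[OF i] by (auto simp: Pts_def)
      moreover have "int (f (pt 1 i) (\<pi> i)) = 1 + c i" using K[OF \<open>pt 1 i \<in> dom a\<close> i]
        by (simp add: pt_def i)
      ultimately show False using \<open>c i < 0\<close> by simp
    qed
    moreover have "\<not> c i > 0"
    proof
      assume cp: "c i > 0"
      define k where "k = (if \<pi> i = 0 then 1 else 0::nat)"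
      have k: "k < n" "k \<noteq> \<pi> i" using n2 by (auto simp: k_def)
      define y where "y = (\<lambda>j. if j < n then (if j = k then M+1 else 1) else (0::nat))"
      have yP: "y \<in> ?P" by (auto simp: y_def Pts_def)
      have "y \<in> ran a" using big[OF yP k(1)] k(1) by (simp add: y_def)
      then obtain x where "a x = Some y" by (auto simp: ran_def)
      then have x: "x \<in> dom a" and fx: "f x = y" by (auto simp: f_def)
      have "x i \<ge> 1" using domP x i by (auto simp: Pts_def)
      moreover have "int (y (\<pi> i)) = 1" using k \<pi>[OF i] by (auto simp: y_def)
      ultimately show False using K[OF x i] fx cp by simp
    qed
    ultimately show ?thesis by simp
  qed
  have fx: "f x (\<pi> i) = x i" if "x \<in> dom a" "i < n" for x i
    using K[OF that] c0[OF that(2)] by simp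
  define \<sigma> where "\<sigma> i = (if i < n then \<pi> i else i)" for i
  have injs: "inj_on \<sigma> {..<n}" using inj by (auto simp: inj_on_def \<sigma>_def)
  have ims: "\<sigma> ` {..<n} \<subseteq> {..<n}" using \<pi> by (auto simp: \<sigma>_def)
  have ims2: "\<sigma> ` {..<n} = {..<n}" using endo_inj_surj[OF _ ims injs] by simp
  have sp: "\<sigma> permutes {..<n}"
    by (rule bij_imp_permutes) (simp add: bij_betw_def injs ims2, simp add: \<sigma>_def)
  have "f x = alpha_perm \<sigma> x" if x: "x \<in> dom a" for x
  proof
    fix j
    show "f x j = alpha_perm \<sigma> x j"
    proof (cases "j < n")
      case True
      then have "j \<in> \<sigma> ` {..<n}" using ims2 by simp
      then obtain i where i: "i < n" "j = \<sigma> i" by auto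
      have "inv \<sigma> j = i" using i permutes_inverses(2)[OF sp] by simp
      then show ?thesis using fx[OF x i(1)] i by (simp add: alpha_perm_def \<sigma>_def)
    next
      case False
      have "inv \<sigma> j = j" using permutes_not_in[OF permutes_inv[OF sp]] False by simp
      moreover have "x j = 0" using domP x False by (auto simp: Pts_def)
      moreover have "f x j = 0" using fP[OF x] False by (auto simp: Pts_def)
      ultimately show ?thesis by (simp add: alpha_perm_def)
    qed
  qed
  then show ?thesis using sp af by (auto simp: Sym_def)
qed


lemma uniq:
  assumes s: "s \<in> Sym n" and t: "t \<in> Sym n" and fin: "finite (Pts n - D)"
    and eq: "\<forall>x\<in>D. alpha_perm s x = alpha_perm t x"
  shows "s = t"
proof
  fix i
  have sp: "s permutes {..<n}" and tp: "t permutes {..<n}" using s t by (auto simp: Sym_def)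
  obtain M :: nat where M: "\<forall>x\<in>Pts n - D. \<forall>k<n. x k \<le> M" using bound_ex[OF fin] by blast
  show "s i = t i"
  proof (cases "i < n")
    case True
    define x where "x = (\<lambda>j. if j < n then (if j = i then M+2 else M+1) else (0::nat))"
    have xP: "x \<in> Pts n" by (auto simp: x_def Pts_def)
    have "x \<in> D" using M xP True by (force simp: x_def)
    then have e: "alpha_perm s x (s i) = alpha_perm t x (s i)" using eq by simp
    have "alpha_perm s x (s i) = M + 2" using permutes_inverses(2)[OF sp] True
      by (simp add: alpha_perm_def x_def)
    moreover have "s i < n" using permutes_in_image[OF sp] True by simp
    then have "inv t (s i) < n" using permutes_in_image[OF permutes_inv[OF tp]] by simp
    ultimately have "inv t (s i) = i" using e by (auto simp: alpha_perm_def x_def split: if_splits)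
    then show ?thesis using permutes_inv_eq[OF tp] by simp
  next
    case False
    then show ?thesis using permutes_not_in[OF sp] permutes_not_in[OF tp] by simp
  qed
qed


definition sig :: "nat \<Rightarrow> ((nat \<Rightarrow> nat) \<rightharpoonup> (nat \<Rightarrow> nat)) \<Rightarrow> (nat \<Rightarrow> nat)" where
  "sig n a = (SOME s. s \<in> Sym n \<and> (\<forall>x\<in>dom a. a x = Some (alpha_perm s x)))"

lemma sigP: assumes "n \<ge> 2" "a \<in> INinf n"
  shows "sig n a \<in> Sym n \<and> (\<forall>x\<in>dom a. a x = Some (alpha_perm (sig n a) x))"
proof -
  obtain s where "s \<in> Sym n \<and> (\<forall>x\<in>dom a. a x = Some (alpha_perm s x))" using main[OF assms] by blast
  then show ?thesis unfolding sig_def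
    using someI[of "\<lambda>s. s \<in> Sym n \<and> (\<forall>x\<in>dom a. a x = Some (alpha_perm s x))"] by blast
qed

lemma sig_eq: assumes "finite (Pts n - dom a)" "s \<in> Sym n" "\<forall>x\<in>dom a. a x = Some (alpha_perm s x)"
  shows "sig n a = s"
proof -
  have "sig n a \<in> Sym n \<and> (\<forall>x\<in>dom a. a x = Some (alpha_perm (sig n a) x))"
    unfolding sig_def by (rule someI[of _ s]) (use assms in blast)
  then have "\<forall>x\<in>dom a. alpha_perm (sig n a) x = alpha_perm s x" using assms(3) by auto
  then show ?thesis using uniq[OF _ assms(2) assms(1)] \<open>sig n a \<in> Sym n \<and> _\<close> by blast
qed

lemma INinf_props: assumes "a \<in> INinf n"
  shows "dom a \<subseteq> Pts n" "ran a \<subseteq> Pts n" "finite (Pts n - dom a)" "finite (Pts n - ran a)"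
  using assms by (auto simp: INinf_def partial_isometry_def cofinite_pmap_def)

lemma ran_char: assumes "a \<in> INinf n" "s permutes {..<n}" "\<forall>x\<in>dom a. a x = Some (alpha_perm s x)"
  shows "y \<in> ran a \<longleftrightarrow> y \<in> Pts n \<and> alpha_perm (inv s) y \<in> dom a"
proof
  assume "y \<in> ran a"
  then obtain x where x: "a x = Some y" by (auto simp: ran_def)
  then have xd: "x \<in> dom a" by auto
  then have "y = alpha_perm s x" using assms(3) x by simp
  then show "y \<in> Pts n \<and> alpha_perm (inv s) y \<in> dom a"
    using al_inv2[OF assms(2)] xd INinf_props(2)[OF assms(1)] x by (auto simp: ran_def)
next
  assume "y \<in> Pts n \<and> alpha_perm (inv s) y \<in> dom a"
  then have "a (alpha_perm (inv s) y) = Some y" using assms(3) al_inv1[OF assms(2)] by simp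
  then show "y \<in> ran a" by (auto simp: ran_def)
qed

lemma agree: assumes "\<forall>x\<in>dom a. a x = Some (alpha_perm s x)" "\<forall>x\<in>dom b. b x = Some (alpha_perm s x)"
  "ran a = ran b" "s permutes S" "x \<in> dom a"
  shows "b x = a x"
proof -
  have "a x = Some (alpha_perm s x)" using assms(1,5) by blast
  then have "alpha_perm s x \<in> ran a" unfolding ran_def by blast
  then have "alpha_perm s x \<in> ran b" using assms(3) by simp
  then obtain x' where x': "b x' = Some (alpha_perm s x)" by (auto simp: ran_def)
  then have "x' \<in> dom b" by auto
  then have "alpha_perm s x' = alpha_perm s x" using assms(2) x' by simp
  then have "x' = x" using al_inj[OF assms(4)] by blast
  then show ?thesis using x' assms(1,5) by simp
qed

theorem theorem4p5:
  fixes n :: nat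
  assumes "n \<ge> 2"
  shows "\<exists>\<Phi>. bij_betw \<Phi> (INinf n) (SDP n) \<and>
           (\<forall>a\<in>INinf n. \<forall>b\<in>INinf n. \<Phi> (pcomp a b) = sdp_mult (\<Phi> a) (\<Phi> b))"
proof -
  let ?P = "Pts n"
  define \<Phi> where "\<Phi> a = (sig n a, ?P - ran a)" for a
  have sigs: "sig n a permutes {..<n}" "\<forall>x\<in>dom a. a x = Some (alpha_perm (sig n a) x)"
    if "a \<in> INinf n" for a using sigP[OF assms that] by (auto simp: Sym_def)
  have inj: "inj_on \<Phi> (INinf n)"
  proof (rule inj_onI)
    fix a b assume a: "a \<in> INinf n" and b: "b \<in> INinf n" and e: "\<Phi> a = \<Phi> b"
    have ss: "sig n a = sig n b" and "?P - ran a = ?P - ran b" using e by (auto simp: \<Phi>_def)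
    then have rr: "ran a = ran b" using INinf_props(2)[OF a] INinf_props(2)[OF b] by blast
    note sa = sigs[OF a] and sb = sigs[OF b]
    show "a = b"
    proof
      fix x
      show "a x = b x"
      proof (cases "x \<in> dom a")
        case True
        then show ?thesis using agree[OF sa(2) sb(2)[folded ss] rr sa(1) True] by simp
      next
        case False
        have "x \<notin> dom b"
        proof
          assume xb: "x \<in> dom b"
          have "a x = b x" using agree[OF sb(2) sa(2)[unfolded ss] rr[symmetric] sb(1) xb] .
          then show False using False xb by (simp add: domIff)
        qed
        then show ?thesis using False by auto
      qed
    qed
  qed
  have img: "\<Phi> ` INinf n = SDP n"
  proof
    show "\<Phi> ` INinf n \<subseteq> SDP n"
      using sigP[OF assms] INinf_props by (auto simp: \<Phi>_def SDP_def)
  next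
    show "SDP n \<subseteq> \<Phi> ` INinf n"
    proof
      fix sF assume "sF \<in> SDP n"
      then obtain s F where sF: "sF = (s, F)" and s: "s \<in> Sym n" and F: "finite F" "F \<subseteq> ?P"
        by (auto simp: SDP_def)
      have sp: "s permutes {..<n}" using s by (simp add: Sym_def)
      define a where "a x = (if x \<in> ?P \<and> alpha_perm s x \<notin> F then Some (alpha_perm s x) else None)" for x
      have doma: "dom a = {x \<in> ?P. alpha_perm s x \<notin> F}" by (auto simp: a_def dom_def)
      have rana: "ran a = ?P - F"
      proof
        show "ran a \<subseteq> ?P - F"
        proof
          fix y assume "y \<in> ran a"
          then obtain x where "a x = Some y" by (auto simp: ran_def)
          then have "x \<in> ?P" "alpha_perm s x \<notin> F" "y = alpha_perm s x"
            by (auto simp: a_def split: if_splits)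
          then show "y \<in> ?P - F" using al_Pts[OF sp] by simp
        qed
      next
        show "?P - F \<subseteq> ran a"
        proof
          fix y assume y: "y \<in> ?P - F"
          then have "a (alpha_perm (inv s) y) = Some y"
            using al_inv1[OF sp] al_Pts[OF permutes_inv[OF sp]] by (simp add: a_def)
          then show "y \<in> ran a" by (auto simp: ran_def)
        qed
      qed
      have ax: "\<forall>x\<in>dom a. a x = Some (alpha_perm s x)" by (auto simp: a_def split: if_splits)
      have fd: "finite (?P - dom a)"
      proof (rule finite_subset[OF _ finite_imageI[OF F(1), of "alpha_perm (inv s)"]])
        show "?P - dom a \<subseteq> alpha_perm (inv s) ` F"
        proof
          fix x assume "x \<in> ?P - dom a"
          then have "alpha_perm s x \<in> F" using doma by auto
          then show "x \<in> alpha_perm (inv s) ` F" by (rule image_eqI[rotated]) (simp add: al_inv2[OF sp])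
        qed
      qed
      have "partial_isometry n a"
        unfolding partial_isometry_def
      proof (intro conjI ballI)
        show "dom a \<subseteq> ?P" using doma by auto
        show "ran a \<subseteq> ?P" using rana by auto
        show "inj_on a (dom a)"
        proof (rule inj_onI)
          fix x y assume "x \<in> dom a" "y \<in> dom a" "a x = a y"
          then have "alpha_perm s x = alpha_perm s y" using ax by simp
          then show "x = y" using al_inj[OF sp] by blast
        qed
        fix x y assume "x \<in> dom a" "y \<in> dom a"
        then show "edist n (the (a x)) (the (a y)) = edist n x y"
          using ax by (simp add: edist_eq_iff d2_al[OF sp])
      qed
      moreover have "cofinite_pmap n a" unfolding cofinite_pmap_def
        using fd rana F by (simp add: Diff_Diff_Int finite_Int)
      ultimately have aI: "a \<in> INinf n" by (simp add: INinf_def)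
      have "\<Phi> a = (s, F)" using sig_eq[OF fd s ax] rana F(2) by (auto simp: \<Phi>_def)
      then have "sF = \<Phi> a" using sF by simp
      then show "sF \<in> \<Phi> ` INinf n" using aI by (rule image_eqI)
    qed
  qed
  have hom: "\<Phi> (pcomp a b) = sdp_mult (\<Phi> a) (\<Phi> b)" if a: "a \<in> INinf n" and b: "b \<in> INinf n" for a b
  proof -
    define sa where "sa = sig n a"
    define sb where "sb = sig n b"
    have sap: "sa permutes {..<n}" and ha: "\<forall>x\<in>dom a. a x = Some (alpha_perm sa x)"
      using sigs[OF a] by (auto simp: sa_def)
    have sbp: "sb permutes {..<n}" and hb: "\<forall>x\<in>dom b. b x = Some (alpha_perm sb x)"
      using sigs[OF b] by (auto simp: sb_def)
    define c where "c = pcomp a b"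
    have cx: "c x = (case a x of None \<Rightarrow> None | Some y \<Rightarrow> b y)" for x
      by (simp add: c_def pcomp_def map_comp_def)
    have domc: "dom c = {x \<in> dom a. alpha_perm sa x \<in> dom b}"
      using ha by (auto simp: cx dom_def split: option.splits)
    have hc: "\<forall>x\<in>dom c. c x = Some (alpha_perm (sb \<circ> sa) x)"
      using domc ha hb al_comp[OF sap sbp] by (auto simp: cx)
    have fdc: "finite (?P - dom c)"
    proof (rule finite_subset)
      show "?P - dom c \<subseteq> (?P - dom a) \<union> alpha_perm (inv sa) ` (?P - dom b)"
      proof
        fix x assume x: "x \<in> ?P - dom c"
        show "x \<in> (?P - dom a) \<union> alpha_perm (inv sa) ` (?P - dom b)"
        proof (cases "x \<in> dom a")
          case True
          then have "alpha_perm sa x \<in> ?P - dom b" using x domc al_Pts[OF sap] by auto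
          then have "x \<in> alpha_perm (inv sa) ` (?P - dom b)" by (rule image_eqI[rotated]) (simp add: al_inv2[OF sap])
          then show ?thesis by (rule UnI2)
        qed (use x in auto)
      qed
      show "finite ((?P - dom a) \<union> alpha_perm (inv sa) ` (?P - dom b))"
        using INinf_props(3)[OF a] INinf_props(3)[OF b] by simp
    qed
    have "sb \<circ> sa \<in> Sym n" using permutes_compose[OF sap sbp] by (simp add: Sym_def)
    then have sc: "sig n c = sym_mult sa sb" using sig_eq[OF fdc _ hc] by (simp add: sym_mult_def)
    have rc: "?P - ran c = hact sb (?P - ran a) \<union> (?P - ran b)"
    proof
      show "?P - ran c \<subseteq> hact sb (?P - ran a) \<union> (?P - ran b)"
      proof
        fix y assume y: "y \<in> ?P - ran c"
        define z where "z = alpha_perm (inv sb) y"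
        have yz: "y = alpha_perm sb z" using al_inv1[OF sbp] by (simp add: z_def)
        have zP: "z \<in> ?P" using al_Pts[OF permutes_inv[OF sbp]] y by (simp add: z_def)
        show "y \<in> hact sb (?P - ran a) \<union> (?P - ran b)"
        proof (cases "z \<in> ran a")
          case False
          then show ?thesis using zP yz by (auto simp: hact_def)
        next
          case True
          then obtain x where x: "a x = Some z" by (auto simp: ran_def)
          have "z \<notin> dom b"
          proof
            assume "z \<in> dom b"
            then have "c x = Some y" using x hb yz by (simp add: cx)
            then show False using y by (auto simp: ran_def)
          qed
          then have "y \<notin> ran b" using ran_char[OF b sbp hb] by (simp add: z_def)
          then show ?thesis using y by auto
        qed
      qed
    next
      show "hact sb (?P - ran a) \<union> (?P - ran b) \<subseteq> ?P - ran c"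
      proof
        fix y assume y: "y \<in> hact sb (?P - ran a) \<union> (?P - ran b)"
        show "y \<in> ?P - ran c"
        proof (cases "y \<in> ?P - ran b")
          case True
          have "y \<notin> ran c"
          proof
            assume "y \<in> ran c"
            then obtain x where "c x = Some y" by (auto simp: ran_def)
            then obtain w where "b w = Some y" by (auto simp: cx split: option.splits)
            then show False using True by (auto simp: ran_def)
          qed
          then show ?thesis using True by auto
        next
          case False
          then obtain z where z: "z \<in> ?P - ran a" "y = alpha_perm sb z" using y by (auto simp: hact_def)
          have yP: "y \<in> ?P" using al_Pts[OF sbp] z by simp
          have "y \<notin> ran c"
          proof
            assume "y \<in> ran c"
            then obtain x where cxy: "c x = Some y" by (auto simp: ran_def)
            then have xd: "x \<in> dom c" by auto
            then have "alpha_perm (sb \<circ> sa) x = y" using hc cxy by simp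
            then have "alpha_perm sb (alpha_perm sa x) = alpha_perm sb z"
              using z al_comp[OF sap sbp] by simp
            then have "z = alpha_perm sa x" by (rule al_inj[OF sbp, symmetric])
            moreover have "a x = Some (alpha_perm sa x)" using xd domc ha by auto
            ultimately show False using z by (auto simp: ran_def)
          qed
          then show ?thesis using yP by auto
        qed
      qed
    qed
    show ?thesis using sc rc by (simp add: \<Phi>_def sdp_mult_def c_def sa_def sb_def)
  qed
  show ?thesis using inj img hom by (auto simp: bij_betw_def)
qed

end
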